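(* Let $f(z)=\sum_{k=0}^d\alpha_kz^k$ be a complex polynomial of degree $d\ge 2$, and consider $z'=f(z)$ as the real planar system $x'=P(x,y)$, $y'=Q(x,y)$ with $P=\operatorname{Re} f(x+iy)$, $Q=\operatorname{Im} f(x+iy)$. Let $p=(p_1,p_2)\in\mathbb{R}^2$, $\|p\|=1$, be a critical point at infinity, and let $\alpha\in\mathbb{R}$ be such that $(P_d(p_1,p_2),Q_d(p_1,p_2))^{\top}=\alpha\,(p_1,p_2)^{\top}$. Then $\alpha\neq 0$. Moreover, if $\alpha>0$ there is a solution $z^*$ of $z'=f(z)$ defined on a maximal interval $(t_{\min},t_{\max})$ with $t_{\max}<\infty$ that diverges to $p_\infty$ as $t\to t_{\max}^-$ (a positive separatrix ending at $p$); if $\alpha<0$ there is a solution with $t_{\min}>-\infty$ that diverges to $p_\infty$ as $t\to t_{\min}^+$ (a negative separatrix starting at $p$).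
   Context: $P_d,Q_d$ denote the homogeneous parts of degree $d$ of $P,Q$. A critical point at infinity is $p$ with $\|p\|=1$ and $p_1Q_d(p_1,p_2)-p_2P_d(p_1,p_2)=0$ (equivalently, $(P_d(p),Q_d(p))$ is a real multiple of $p$). A continuous curve $y(t)$ diverges to $p_\infty$ as $t\to t_{\max}^-$ if $\|y(t)\|\to\infty$ and $y(t)/\|y(t)\|\to p$. A trajectory $\gamma$ of $z'=f(z)$ is a positive (negative) separatrix if there is a point $z\in\gamma$ such that the maximal interval of existence of the solution starting at $z$ in positive (negative) time is finite. *)

theory Defs
  imports "HOL-Analysis.Analysis" "HOL-Computational_Algebra.Polynomial"
begin

text \<open>Homogeneous part of degree k of P(x,y) = Re f(x+iy) and Q(x,y) = Im f(x+iy).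
  Since (x+iy)^j is a homogeneous polynomial of degree j in (x,y), the
  degree-k homogeneous part of f(x+iy) is exactly coeff f k * (x+iy)^k.\<close>
definition hom_P :: "complex poly \<Rightarrow> nat \<Rightarrow> real \<Rightarrow> real \<Rightarrow> real" where
  "hom_P f k x y = Re (coeff f k * Complex x y ^ k)"

definition hom_Q :: "complex poly \<Rightarrow> nat \<Rightarrow> real \<Rightarrow> real \<Rightarrow> real" where
  "hom_Q f k x y = Im (coeff f k * Complex x y ^ k)"

definition ode_solution_on :: "complex poly \<Rightarrow> (real \<Rightarrow> complex) \<Rightarrow> real set \<Rightarrow> bool" where
  "ode_solution_on f z I \<longleftrightarrow> (\<forall>t\<in>I. (z has_vector_derivative poly f (z t)) (at t))"

definition maximal_solution :: "complex poly \<Rightarrow> (real \<Rightarrow> complex) \<Rightarrow> real set \<Rightarrow> bool" where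
  "maximal_solution f z I \<longleftrightarrow> I \<noteq> {} \<and> open I \<and> is_interval I \<and> ode_solution_on f z I \<and>
     (\<forall>J w. open J \<and> is_interval J \<and> I \<subseteq> J \<and> ode_solution_on f w J \<and> (\<forall>t\<in>I. w t = z t)
        \<longrightarrow> J = I)"

end

theory Submission imports Defs "HOL-Complex_Analysis.Complex_Analysis" begin


definition graph :: "(real \<Rightarrow> complex) \<Rightarrow> real set \<Rightarrow> (real \<times> complex) set" where
  "graph w J = {(t, w t) | t. t \<in> J}"

lemma graph_mem: "(t,y) \<in> graph w J \<longleftrightarrow> t \<in> J \<and> y = w t"
  by (auto simp: graph_def)

lemma fst_graph: "fst ` graph w J = J"
  by (force simp: graph_def image_iff)

lemma maximal_extension:
  assumes sol: "ode_solution_on f z I0" and oI: "open I0" and iI: "is_interval I0" and ne: "I0 \<noteq> {}"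
  shows "\<exists>J w. maximal_solution f w J \<and> I0 \<subseteq> J \<and> (\<forall>t\<in>I0. w t = z t)"
proof -
  define A where "A = {graph w J | w J. open J \<and> is_interval J \<and> I0 \<subseteq> J \<and> ode_solution_on f w J \<and> (\<forall>t\<in>I0. w t = z t)}"
  have "\<exists>U\<in>A. \<forall>X\<in>C. X \<subseteq> U" if C: "C \<in> chains A" for C
  proof (cases "C = {}")
    case True
    have "graph z I0 \<in> A" using assms unfolding A_def by blast
    then show ?thesis using True by blast
  next
    case False
    have CA: "C \<subseteq> A" and ch: "\<And>G1 G2. G1 \<in> C \<Longrightarrow> G2 \<in> C \<Longrightarrow> G1 \<subseteq> G2 \<or> G2 \<subseteq> G1"
      using C by (auto simp: chains_def chain_subset_def)
    define U where "U = \<Union>C"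
    have func: "y1 = y2" if hh: "(t,y1) \<in> U" "(t,y2) \<in> U" for t y1 y2
    proof -
      obtain G1 G2 where G: "G1 \<in> C" "G2 \<in> C" "(t,y1) \<in> G1" "(t,y2) \<in> G2" using hh unfolding U_def by blast
      obtain G where "G \<in> C" "(t,y1) \<in> G" "(t,y2) \<in> G" using ch[OF G(1,2)] G by blast
      then have "G \<in> A" using CA by blast
      then obtain wG JG where "G = graph wG JG" unfolding A_def by blast
      then show ?thesis using \<open>(t,y1) \<in> G\<close> \<open>(t,y2) \<in> G\<close> by (simp add: graph_mem)
    qed
    define w where "w t = (SOME y. (t,y) \<in> U)" for t
    define J where "J = fst ` U"
    have wU: "(t, w t) \<in> U" if "t \<in> J" for t
      using that unfolding J_def w_def by (auto intro: someI)
    have Ugr: "U = graph w J"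
    proof -
      have "(t,y) \<in> U \<longleftrightarrow> t \<in> J \<and> y = w t" for t y
      proof
        assume h: "(t,y) \<in> U"
        then have "t \<in> J" unfolding J_def by (metis fst_conv image_eqI)
        then show "t \<in> J \<and> y = w t" using func[OF h wU] by simp
      next
        assume "t \<in> J \<and> y = w t" then show "(t,y) \<in> U" using wU by simp
      qed
      then show ?thesis by (auto simp: graph_mem)
    qed
    have memb: "\<exists>wG JG. G = graph wG JG \<and> open JG \<and> is_interval JG \<and> I0 \<subseteq> JG \<and> ode_solution_on f wG JG
         \<and> (\<forall>t\<in>I0. wG t = z t) \<and> JG \<subseteq> J \<and> (\<forall>t\<in>JG. w t = wG t)" if "G \<in> C" for G
    proof -
      obtain wG JG where G: "G = graph wG JG" "open JG" "is_interval JG" "I0 \<subseteq> JG" "ode_solution_on f wG JG"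
         "\<forall>t\<in>I0. wG t = z t" using CA \<open>G \<in> C\<close> unfolding A_def by blast
      have sub: "(t, wG t) \<in> U" if "t \<in> JG" for t using that G(1) \<open>G \<in> C\<close> U_def by (auto simp: graph_mem)
      have "JG \<subseteq> J" using sub unfolding J_def by (metis fst_conv image_eqI subsetI)
      moreover have "\<forall>t\<in>JG. w t = wG t" using sub func \<open>JG \<subseteq> J\<close> wU by (metis subsetD)
      ultimately show ?thesis using G by (intro exI[of _ wG] exI[of _ JG]) simp
    qed
    have UA: "U \<in> A"
    proof -
      have "open J"
        unfolding open_subopen[of J]
      proof
        fix t assume "t \<in> J"
        then obtain G y where "G \<in> C" "(t,y) \<in> G" unfolding J_def U_def by force
        then obtain wG JG where GG: "G = graph wG JG" "open JG" "is_interval JG" "I0 \<subseteq> JG" "ode_solution_on f wG JG"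
         "\<forall>t\<in>I0. wG t = z t" "JG \<subseteq> J" "\<forall>t\<in>JG. w t = wG t" using memb by metis
        then show "\<exists>T. open T \<and> t \<in> T \<and> T \<subseteq> J" using \<open>(t,y) \<in> G\<close> GG by (auto simp: graph_mem)
      qed
      moreover have "is_interval J"
        unfolding is_interval_1
      proof (intro ballI allI impI)
        fix a b x :: real assume "a \<in> J" "b \<in> J" and ab: "a \<le> x \<and> x \<le> b"
        obtain G1 y1 where G1: "G1 \<in> C" "(a,y1) \<in> G1" using \<open>a \<in> J\<close> unfolding J_def U_def by auto
        obtain G2 y2 where G2: "G2 \<in> C" "(b,y2) \<in> G2" using \<open>b \<in> J\<close> unfolding J_def U_def by auto
        obtain G where G: "G \<in> C" "(a,y1) \<in> G" "(b,y2) \<in> G" using ch[OF G1(1) G2(1)] G1 G2 by blast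
        then obtain wG JG where GG0: "G = graph wG JG" "open JG" "is_interval JG" "I0 \<subseteq> JG" "ode_solution_on f wG JG"
         "\<forall>t\<in>I0. wG t = z t" "JG \<subseteq> J" "\<forall>t\<in>JG. w t = wG t" using memb by metis
        note GG = GG0(1,3,7)
        have "a \<in> JG" "b \<in> JG" using G(2,3) GG(1) by (simp_all add: graph_mem)
        then have "x \<in> JG" using GG(2) ab unfolding is_interval_1 by blast
        then show "x \<in> J" using GG(3) by blast
      qed
      obtain G where "G \<in> C" using False by blast
      then obtain wG JG where G0: "G = graph wG JG" "open JG" "is_interval JG" "I0 \<subseteq> JG" "ode_solution_on f wG JG"
         "\<forall>t\<in>I0. wG t = z t" "JG \<subseteq> J" "\<forall>t\<in>JG. w t = wG t" using memb by metis
      note G = G0(4,7,8,6)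
      have "I0 \<subseteq> J" using G(1,2) by (rule subset_trans)
      moreover have "\<forall>t\<in>I0. w t = z t"
      proof
        fix t assume "t \<in> I0"
        then have "t \<in> JG" using G(1) by blast
        then show "w t = z t" using G(3,4) \<open>t \<in> I0\<close> by simp
      qed
      moreover have "ode_solution_on f w J"
        unfolding ode_solution_on_def
      proof
        fix t assume "t \<in> J"
        then obtain G y where "G \<in> C" "(t,y) \<in> G" unfolding J_def U_def by force
        then obtain wG JG where G0: "G = graph wG JG" "open JG" "is_interval JG" "I0 \<subseteq> JG" "ode_solution_on f wG JG"
         "\<forall>t\<in>I0. wG t = z t" "JG \<subseteq> J" "\<forall>t\<in>JG. w t = wG t" using memb by metis
        note G = G0(1,2,5,8)
        have tJ: "t \<in> JG" using G(1) \<open>(t,y) \<in> G\<close> by (simp add: graph_mem)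
        have "(wG has_vector_derivative poly f (wG t)) (at t)" using G(3) tJ unfolding ode_solution_on_def by blast
        then have "(w has_vector_derivative poly f (wG t)) (at t)"
          by (rule has_vector_derivative_transform_within_open[OF _ G(2) tJ]) (use G(4) in auto)
        then show "(w has_vector_derivative poly f (w t)) (at t)" using G(4) tJ by simp
      qed
      ultimately show ?thesis unfolding A_def
        apply (intro CollectI exI[of _ w] exI[of _ J])
        using Ugr \<open>open J\<close> \<open>is_interval J\<close> by simp
    qed
    moreover have "\<forall>X\<in>C. X \<subseteq> U" unfolding U_def by blast
    ultimately show ?thesis by (intro bexI[of _ U])
  qed
  then obtain M where MA: "M \<in> A" and Mmax: "\<forall>X\<in>A. M \<subseteq> X \<longrightarrow> X = M"
    using Zorn_Lemma2[of A] by blast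
  obtain w J where M: "M = graph w J" "open J" "is_interval J" "I0 \<subseteq> J" "ode_solution_on f w J" "\<forall>t\<in>I0. w t = z t"
    using MA unfolding A_def by blast
  have "maximal_solution f w J"
    unfolding maximal_solution_def
  proof (intro conjI allI impI)
    show "J \<noteq> {}" using M ne by blast
    fix J' w' assume H: "open J' \<and> is_interval J' \<and> J \<subseteq> J' \<and> ode_solution_on f w' J' \<and> (\<forall>t\<in>J. w' t = w t)"
    have "graph w' J' \<in> A" unfolding A_def
      apply (rule CollectI, rule exI[of _ w'], rule exI[of _ J'])
      using H M by auto
    moreover have "M \<subseteq> graph w' J'" using H M by (auto simp: graph_mem)
    ultimately have "graph w' J' = graph w J" using Mmax M by blast
    then show "J' = J" by (metis fst_graph)
  qed (use M in auto)
  then show ?thesis using M by blast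
qed



lemma power_match_aux:
  fixes F1 F2 :: "complex \<Rightarrow> complex"
  assumes c1: "isCont F1 0" and c2: "isCont F2 0" and n1: "F1 0 \<noteq> 0"
    and ev: "eventually (\<lambda>w. w^m * F1 w = w^k * F2 w) (at 0)" and mk: "m < k"
  shows False
proof -
  have ev2: "eventually (\<lambda>w. F1 w = w^(k-m) * F2 w) (at 0)"
  proof -
    have "eventually (\<lambda>w. w \<noteq> 0) (at (0::complex))" by (simp add: eventually_at_filter)
    with ev show ?thesis
    proof (eventually_elim)
    case (elim w)
    then have "w \<noteq> 0" by simp
    have "w^k = w^m * w^(k-m)" using mk by (simp add: power_add[symmetric])
    then show ?case using elim \<open>w \<noteq> 0\<close> by simp
  qed
  qed
  have "((\<lambda>w. w^(k-m) * F2 w) \<longlongrightarrow> 0^(k-m) * F2 0) (at 0)"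
    using c2 unfolding isCont_def by (intro tendsto_intros) auto
  then have "((\<lambda>w. w^(k-m) * F2 w) \<longlongrightarrow> 0) (at 0)" using mk by (simp add: power_0_left)
  then have "(F1 \<longlongrightarrow> 0) (at 0)" 
  proof (rule Lim_transform_eventually)
    show "\<forall>\<^sub>F x in at 0. x ^ (k - m) * F2 x = F1 x" using ev2 by (simp add: eq_commute)
  qed
  moreover have "(F1 \<longlongrightarrow> F1 0) (at 0)" using c1 by (simp add: isCont_def)
  ultimately have "F1 0 = 0" using tendsto_unique[OF at_neq_bot] by blast
  then show False using n1 by simp
qed

lemma power_match:
  fixes F1 F2 :: "complex \<Rightarrow> complex"
  assumes c1: "isCont F1 0" and c2: "isCont F2 0" and n1: "F1 0 \<noteq> 0" and n2: "F2 0 \<noteq> 0"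
    and ev: "eventually (\<lambda>w. w^m * F1 w = w^k * F2 w) (at 0)"
  shows "m = k \<and> F1 0 = F2 0"
proof -
  have "\<not> m < k" using power_match_aux[OF c1 c2 n1 ev] by blast
  moreover have ev': "eventually (\<lambda>w. w^k * F2 w = w^m * F1 w) (at 0)" using ev by (simp add: eq_commute)
  then have "\<not> k < m" using power_match_aux[OF c2 c1 n2 ev'] by blast
  ultimately have mk: "m = k" by simp
  have ev2: "eventually (\<lambda>w. F1 w = F2 w) (at 0)"
  proof -
    have "eventually (\<lambda>w. w \<noteq> 0) (at (0::complex))" by (simp add: eventually_at_filter)
    with ev show ?thesis by eventually_elim (use mk in simp)
  qed
  have "(F1 \<longlongrightarrow> F1 0) (at 0)" using c1 by (simp add: isCont_def)
  then have "(F2 \<longlongrightarrow> F1 0) (at 0)" using ev2 by (rule Lim_transform_eventually)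
  moreover have "(F2 \<longlongrightarrow> F2 0) (at 0)" using c2 by (simp add: isCont_def)
  ultimately have "F1 0 = F2 0" using tendsto_unique[OF at_neq_bot] by blast
  then show ?thesis using mk by simp
qed

lemma factor_lemma:
  fixes f :: "complex poly"
  assumes deg: "degree f \<ge> 2"
  obtains r G H where "r > 0" "G holomorphic_on ball 0 r" "\<And>w. w \<in> ball 0 r \<Longrightarrow> G w \<noteq> 0"
    "G 0 = -1 / (lead_coeff f * of_nat (degree f - 1))"
    "\<And>w. w \<in> ball 0 r \<Longrightarrow> poly (reflect_poly f) w \<noteq> 0"
    "\<And>w. w \<in> ball 0 r \<Longrightarrow> (H has_field_derivative - (w ^ (degree f - 2)) / poly (reflect_poly f) w) (at w)"
    "\<And>w. w \<in> ball 0 r \<Longrightarrow> H w = w ^ (degree f - 1) * G w"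
proof -
  define d where "d = degree f"
  define a where "a = lead_coeff f"
  define q where "q = reflect_poly f"
  have fnz: "f \<noteq> 0" using deg by auto
  then have anz: "a \<noteq> 0" unfolding a_def by simp
  have q0: "poly q 0 = a" unfolding q_def a_def by simp
  have "isCont (poly q) 0" by simp
  then obtain r0 where r0: "r0 > 0" "\<And>y. dist 0 y < r0 \<Longrightarrow> poly q y \<noteq> 0"
    using continuous_at_avoid[of 0 "poly q" 0] q0 anz by auto
  have qnz: "poly q w \<noteq> 0" if "w \<in> ball 0 r0" for w using r0(2) that by simp
  define Hd where "Hd w = - (w ^ (d - 2)) / poly q w" for w
  have hol: "Hd holomorphic_on ball 0 r0"
    unfolding Hd_def by (intro holomorphic_intros) (use qnz in auto)
  obtain g where g: "\<And>x. x \<in> ball 0 r0 \<Longrightarrow> (g has_field_derivative Hd x) (at x within ball 0 r0)"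
    using holomorphic_convex_primitive'[OF convex_ball open_ball hol] by blast
  define H where "H w = g w - g 0" for w
  have dH: "(H has_field_derivative Hd x) (at x)" if "x \<in> ball 0 r0" for x
  proof -
    have "(g has_field_derivative Hd x) (at x)" using g[OF that] at_within_open[OF that open_ball] by simp
    then show ?thesis unfolding H_def by (auto intro!: derivative_eq_intros)
  qed
  have Hhol: "H holomorphic_on ball 0 r0"
    unfolding holomorphic_on_def field_differentiable_def using dH by (metis has_field_derivative_at_within)
  have H0: "H 0 = 0" unfolding H_def by simp
  have nonconst: "\<not> H constant_on ball 0 r0"
  proof
    assume "H constant_on ball 0 r0"
    then obtain c where c: "\<And>x. x \<in> ball 0 r0 \<Longrightarrow> H x = c" unfolding constant_on_def by blast
    define w1 where "w1 = complex_of_real (r0/2)"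
    have w1: "w1 \<in> ball 0 r0" "w1 \<noteq> 0" using r0 unfolding w1_def by auto
    have "((\<lambda>x. c) has_field_derivative 0) (at w1)" by simp
    then have "(H has_field_derivative 0) (at w1)"
      by (rule has_field_derivative_transform_within_open[OF _ open_ball w1(1)]) (simp add: c)
    then have "Hd w1 = 0" using DERIV_unique dH[OF w1(1)] by blast
    moreover have "Hd w1 \<noteq> 0" unfolding Hd_def using w1 qnz by simp
    ultimately show False by simp
  qed
  have c0: "0 \<in> ball (0::complex) r0" using r0 by simp
  obtain G r n where Gr: "0 < n" "0 < r" "ball (0::complex) r \<subseteq> ball 0 r0" "G holomorphic_on ball 0 r"
      "\<And>w. w \<in> ball 0 r \<Longrightarrow> H w = (w - 0)^n * G w" "\<And>w. w \<in> ball 0 r \<Longrightarrow> G w \<noteq> 0"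
    by (rule holomorphic_factor_zero_nonconstant[OF Hhol open_ball connected_ball c0 H0 nonconst]) (rule that, assumption+)
  have dG: "(G has_field_derivative deriv G w) (at w)" if "w \<in> ball 0 r" for w
    using holomorphic_derivI[OF Gr(4) open_ball that] .
  have HdE: "Hd w = of_nat n * w^(n-1) * G w + w^n * deriv G w" if w: "w \<in> ball 0 r" for w
  proof -
    have "((\<lambda>w. w^n * G w) has_field_derivative of_nat n * w^(n-1) * G w + w^n * deriv G w) (at w)"
      by (auto intro!: derivative_eq_intros dG[OF w])
    then have "(H has_field_derivative of_nat n * w^(n-1) * G w + w^n * deriv G w) (at w)"
      by (rule has_field_derivative_transform_within_open[OF _ open_ball w]) (simp add: Gr(5))
    then show ?thesis using DERIV_unique dH w Gr(3) by blast
  qed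
  have cr: "0 \<in> ball (0::complex) r" using Gr(2) by simp
  define E where "E w = of_nat n * G w + w * deriv G w" for w
  define Qf where "Qf w = - 1 / poly q w" for w
  have ev: "eventually (\<lambda>w. w^(n-1) * E w = w^(d-2) * Qf w) (at 0)"
    using eventually_at_in_open'[OF open_ball cr]
  proof (eventually_elim)
    case (elim w)
    have "w^n = w * w^(n-1)" using Gr(1) by (metis power_eq_if not_gr0)
    then have "w^(n-1) * E w = Hd w" using HdE[OF elim] unfolding E_def by (simp add: algebra_simps)
    also have "\<dots> = w^(d-2) * Qf w" unfolding Hd_def Qf_def by simp
    finally show ?case .
  qed
  have cE: "isCont E 0"
  proof -
    have "E holomorphic_on ball 0 r" unfolding E_def
      by (intro holomorphic_intros Gr(4) holomorphic_deriv) auto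
    then have "continuous_on (ball 0 r) E" by (rule holomorphic_on_imp_continuous_on)
    then show ?thesis using continuous_on_eq_continuous_at[OF open_ball] cr by blast
  qed
  have cQ: "isCont Qf 0" unfolding Qf_def using q0 anz by (intro continuous_intros) auto
  have E0: "E 0 \<noteq> 0" unfolding E_def using Gr(1) Gr(6)[OF cr] by simp
  have Q0: "Qf 0 \<noteq> 0" unfolding Qf_def using q0 anz by simp
  from power_match[OF cE cQ E0 Q0 ev] have nd: "n - 1 = d - 2" and EQ: "E 0 = Qf 0" by auto
  have nd': "n = d - 1" using nd Gr(1) deg unfolding d_def by linarith
  have e0: "of_nat n * G 0 = - 1 / a" using EQ unfolding E_def Qf_def q0 by simp
  have nz: "of_nat n \<noteq> (0::complex)" using Gr(1) by simp
  have "G 0 = (of_nat n * G 0) / of_nat n" using nz by simp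
  also have "\<dots> = (-1 / a) / of_nat n" by (simp only: e0)
  finally have "G 0 = (-1 / a) / of_nat n" .
  then have G0: "G 0 = -1 / (a * of_nat (d - 1))" using nd' by simp
  show ?thesis
  proof (rule that[of r G H])
    show "0 < r" by (rule Gr(2))
    show "G holomorphic_on ball 0 r" by (rule Gr(4))
    show "G w \<noteq> 0" if "w \<in> ball 0 r" for w using Gr(6) that .
    show "G 0 = -1 / (lead_coeff f * of_nat (degree f - 1))" using G0 unfolding a_def d_def .
    show "poly (reflect_poly f) w \<noteq> 0" if "w \<in> ball 0 r" for w using qnz that Gr(3) unfolding q_def by blast
    show "(H has_field_derivative - (w ^ (degree f - 2)) / poly (reflect_poly f) w) (at w)" if "w \<in> ball 0 r" for w
      using dH that Gr(3) unfolding Hd_def q_def d_def by blast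
    show "H w = w ^ (degree f - 1) * G w" if "w \<in> ball 0 r" for w
      using Gr(5)[OF that] nd' unfolding d_def by simp
  qed
qed

lemma root_inverse_lemma:
  fixes G :: "complex \<Rightarrow> complex" and m :: nat
  assumes r: "r > 0" and Ghol: "G holomorphic_on ball 0 r" and Gnz: "\<And>w. w \<in> ball 0 r \<Longrightarrow> G w \<noteq> 0"
    and m: "m > 0"
  obtains r2 \<rho> \<Psi> \<epsilon> where "0 < r2" "ball (0::complex) r2 \<subseteq> ball 0 r" "\<rho> holomorphic_on ball 0 r2" "\<rho> 0 = 1"
    "\<And>w. w \<in> ball 0 r2 \<Longrightarrow> \<rho> w ^ m = G w / G 0" "\<And>w. w \<in> ball 0 r2 \<Longrightarrow> \<rho> w \<noteq> 0"
    "\<epsilon> > 0" "\<Psi> holomorphic_on ball 0 \<epsilon>"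
    "\<And>v. v \<in> ball 0 \<epsilon> \<Longrightarrow> \<Psi> v \<in> ball 0 r2" "\<And>v. v \<in> ball 0 \<epsilon> \<Longrightarrow> \<Psi> v * \<rho> (\<Psi> v) = v" "\<Psi> 0 = 0"
proof -
  have c0: "0 \<in> ball (0::complex) r" using r by simp
  define G0 where "G0 = G 0"
  have G0nz: "G0 \<noteq> 0" using Gnz[OF c0] unfolding G0_def .
  have "continuous_on (ball 0 r) G" using Ghol by (rule holomorphic_on_imp_continuous_on)
  then have "isCont G 0" using continuous_on_eq_continuous_at[OF open_ball] c0 by blast
  then have "isCont (\<lambda>w. G w / G0) 0" by (intro continuous_intros) (use G0nz in auto)
  then obtain r1 where r1: "r1 > 0" "\<And>w. dist w 0 < r1 \<Longrightarrow> dist (G w / G0) (G 0 / G0) < 1"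
    unfolding continuous_at_eps_delta by (meson zero_less_one)
  define r1' where "r1' = min r1 r"
  have r1': "r1' > 0" "ball (0::complex) r1' \<subseteq> ball 0 r" using r1 r unfolding r1'_def by auto
  have Re_pos: "Re (G w / G0) > 0" if "w \<in> ball 0 r1'" for w
  proof -
    have "dist (G w / G0) 1 < 1" using r1(2)[of w] that G0nz unfolding r1'_def G0_def by (simp add: dist_commute)
    then have "cmod (G w / G0 - 1) < 1" by (simp add: dist_norm)
    moreover have "\<bar>Re (G w / G0 - 1)\<bar> \<le> cmod (G w / G0 - 1)" by (rule abs_Re_le_cmod)
    ultimately show ?thesis by simp
  qed
  have notneg: "G w / G0 \<notin> \<real>\<^sub>\<le>\<^sub>0" if "w \<in> ball 0 r1'" for w
    using Re_pos[OF that] by (auto simp: complex_nonpos_Reals_iff)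
  define \<rho> where "\<rho> w = exp (Ln (G w / G0) / of_nat m)" for w
  have Ghol': "G holomorphic_on ball 0 r1'" using Ghol r1'(2) by (rule holomorphic_on_subset)
  have rhol: "\<rho> holomorphic_on ball 0 r1'"
    unfolding \<rho>_def by (intro holomorphic_intros Ghol' holomorphic_on_Ln') (use notneg G0nz in auto)
  have rpow: "\<rho> w ^ m = G w / G0" if "w \<in> ball 0 r1'" for w
  proof -
    have "w \<in> ball 0 r" using that r1'(2) by blast
    then have "G w / G0 \<noteq> 0" using Gnz G0nz by simp
    have "\<rho> w ^ m = exp (of_nat m * (Ln (G w / G0) / of_nat m))" unfolding \<rho>_def by (rule exp_of_nat_mult[symmetric])
    also have "\<dots> = exp (Ln (G w / G0))" using m by simp
    also have "\<dots> = G w / G0" using \<open>G w / G0 \<noteq> 0\<close> by simp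
    finally show ?thesis .
  qed
  have r0: "\<rho> 0 = 1" unfolding \<rho>_def using G0nz unfolding G0_def by simp
  define \<Phi> where "\<Phi> w = w * \<rho> w" for w
  have Phol: "\<Phi> holomorphic_on ball 0 r1'" unfolding \<Phi>_def by (intro holomorphic_intros rhol)
  have c1: "0 \<in> ball (0::complex) r1'" using r1' by simp
  have "(\<rho> has_field_derivative deriv \<rho> 0) (at 0)" using holomorphic_derivI[OF rhol open_ball c1] .
  then have "(\<Phi> has_field_derivative 1 * \<rho> 0 + 0 * deriv \<rho> 0) (at 0)"
    unfolding \<Phi>_def by (auto intro!: derivative_eq_intros)
  then have dP: "deriv \<Phi> 0 = 1" using r0 by (simp add: DERIV_imp_deriv)
  obtain r2 where r2: "r2 > 0" "ball (0::complex) r2 \<subseteq> ball 0 r1'" "inj_on \<Phi> (ball 0 r2)"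
    using has_complex_derivative_locally_injective[OF Phol c1 open_ball] dP by auto
  have Phol2: "\<Phi> holomorphic_on ball 0 r2" using Phol r2(2) by (rule holomorphic_on_subset)
  obtain \<Psi> where Psi: "\<Psi> holomorphic_on (\<Phi> ` ball 0 r2)" "\<And>z. z \<in> ball 0 r2 \<Longrightarrow> \<Psi> (\<Phi> z) = z"
    using holomorphic_has_inverse[OF Phol2 open_ball r2(3)] by metis
  have opn: "open (\<Phi> ` ball 0 r2)" by (rule open_mapping_thm3[OF Phol2 open_ball r2(3)])
  have c2: "0 \<in> ball (0::complex) r2" using r2 by simp
  have P0: "\<Phi> 0 = 0" unfolding \<Phi>_def by simp
  then have "0 \<in> \<Phi> ` ball 0 r2" using c2 by (metis image_eqI)
  then obtain \<epsilon> where eps: "\<epsilon> > 0" "ball 0 \<epsilon> \<subseteq> \<Phi> ` ball 0 r2" using opn open_contains_ball by blast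
  have inv: "\<Psi> v \<in> ball 0 r2 \<and> \<Psi> v * \<rho> (\<Psi> v) = v" if vin: "v \<in> ball 0 \<epsilon>" for v
  proof -
    obtain u where u: "u \<in> ball 0 r2" "v = \<Phi> u" using eps(2) vin by blast
    then have "\<Psi> v = u" using Psi(2) by simp
    then show ?thesis using u unfolding \<Phi>_def by simp
  qed
  show ?thesis
  proof (rule that[of r2 \<rho> \<epsilon> \<Psi>])
    show "0 < r2" by (rule r2(1))
    show "ball (0::complex) r2 \<subseteq> ball 0 r" using r2(2) r1'(2) by blast
    show "\<rho> holomorphic_on ball 0 r2" using rhol r2(2) by (rule holomorphic_on_subset)
    show "\<rho> 0 = 1" by (rule r0)
    show "\<rho> w ^ m = G w / G 0" if "w \<in> ball 0 r2" for w using rpow that r2(2) unfolding G0_def by blast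
    show "\<rho> w \<noteq> 0" if "w \<in> ball 0 r2" for w unfolding \<rho>_def by simp
    show "\<epsilon> > 0" by (rule eps(1))
    show "\<Psi> holomorphic_on ball 0 \<epsilon>" using Psi(1) eps(2) by (rule holomorphic_on_subset)
    show "\<Psi> v \<in> ball 0 r2" if "v \<in> ball 0 \<epsilon>" for v using inv[OF that] by blast
    show "\<Psi> v * \<rho> (\<Psi> v) = v" if "v \<in> ball 0 \<epsilon>" for v using inv[OF that] by blast
    show "\<Psi> 0 = 0" using Psi(2)[OF c2] P0 by simp
  qed
qed

lemma powr_root_pow:
  fixes x :: real
  assumes "x > 0" "m > 0"
  shows "(x powr (1 / real m)) ^ m = x"
proof -
  have "(x powr (1 / real m)) ^ m = (x powr (1 / real m)) powr (real m)"
    using assms by (simp add: powr_realpow)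
  also have "\<dots> = x powr (1 / real m * real m)" by (rule powr_powr)
  also have "\<dots> = x" using assms by simp
  finally show ?thesis .
qed

lemma local_sep:
  fixes f :: "complex poly" and P :: complex and \<alpha> :: real
  assumes deg: "degree f \<ge> 2" and nP: "cmod P = 1"
    and eq: "lead_coeff f * P ^ degree f = complex_of_real \<alpha> * P" and apos: "\<alpha> > 0"
  shows "\<exists>\<delta>>0. \<exists>Z. (\<forall>\<tau>\<in>{0<..<\<delta>}. (Z has_vector_derivative - poly f (Z \<tau>)) (at \<tau>)) \<and>
    filterlim (\<lambda>\<tau>. norm (Z \<tau>)) at_top (at_right 0) \<and>
    ((\<lambda>\<tau>. Z \<tau> / complex_of_real (norm (Z \<tau>))) \<longlongrightarrow> P) (at_right 0)"
proof -
  define d where "d = degree f"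
  define a where "a = lead_coeff f"
  define m where "m = d - 1"
  define q where "q = reflect_poly f"
  have m0: "m > 0" using deg unfolding m_def d_def by simp
  have dm: "d = Suc m" using deg unfolding m_def d_def by simp
  obtain r G H where fl: "r > 0" "G holomorphic_on ball 0 r" "\<And>w. w \<in> ball 0 r \<Longrightarrow> G w \<noteq> 0"
    "G 0 = -1 / (a * of_nat m)"
    "\<And>w. w \<in> ball 0 r \<Longrightarrow> poly q w \<noteq> 0"
    "\<And>w. w \<in> ball 0 r \<Longrightarrow> (H has_field_derivative - (w ^ (d - 2)) / poly q w) (at w)"
    "\<And>w. w \<in> ball 0 r \<Longrightarrow> H w = w ^ m * G w"
    using factor_lemma[OF deg] unfolding a_def m_def d_def q_def by metis
  obtain r2 \<rho> \<Psi> \<epsilon> where ri: "0 < r2" "ball (0::complex) r2 \<subseteq> ball 0 r" "\<rho> holomorphic_on ball 0 r2" "\<rho> 0 = 1"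
    "\<And>w. w \<in> ball 0 r2 \<Longrightarrow> \<rho> w ^ m = G w / G 0" "\<And>w. w \<in> ball 0 r2 \<Longrightarrow> \<rho> w \<noteq> 0"
    "\<epsilon> > 0" "\<Psi> holomorphic_on ball 0 \<epsilon>"
    "\<And>v. v \<in> ball 0 \<epsilon> \<Longrightarrow> \<Psi> v \<in> ball 0 r2" "\<And>v. v \<in> ball 0 \<epsilon> \<Longrightarrow> \<Psi> v * \<rho> (\<Psi> v) = v" "\<Psi> 0 = 0"
    by (rule root_inverse_lemma[OF fl(1,2,3) m0]) blast+
  have PP: "P * cnj P = 1" using nP by (simp add: complex_mult_cnj cmod_def power2_eq_square[symmetric])
  have aP: "a = of_real \<alpha> * cnj P ^ m"
  proof -
    have "a = a * (P * cnj P) ^ d" using PP by simp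
    also have "\<dots> = (a * P ^ d) * cnj P ^ d" by (simp add: power_mult_distrib)
    also have "\<dots> = (of_real \<alpha> * P) * (cnj P * cnj P ^ m)" using eq unfolding a_def d_def[symmetric] dm
      by (simp only: power_Suc)
    also have "\<dots> = of_real \<alpha> * (P * cnj P) * cnj P ^ m" by (simp only: mult_ac)
    also have "\<dots> = of_real \<alpha> * cnj P ^ m" using PP by simp
    finally show ?thesis .
  qed
  define c where "c = real m * \<alpha>"
  have c0: "c > 0" unfolding c_def using m0 apos by simp
  define k where "k = c powr (1 / real m)"
  have k0: "k > 0" unfolding k_def using c0 by simp
  define \<beta> where "\<beta> = cnj P * complex_of_real k"
  have bnz: "\<beta> \<noteq> 0" unfolding \<beta>_def using k0 PP by auto
  have bm: "\<beta> ^ m = a * of_nat m"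
  proof -
    have "\<beta> ^ m = cnj P ^ m * of_real (k ^ m)" unfolding \<beta>_def by (simp add: power_mult_distrib)
    also have "k ^ m = c" unfolding k_def using powr_root_pow[OF c0 m0] .
    finally show ?thesis unfolding aP c_def by simp
  qed
  define s where "s \<tau> = \<tau> powr (1 / real m)" for \<tau> :: real
  define v where "v \<tau> = \<beta> * complex_of_real (s \<tau>)" for \<tau>
  have ev0: "eventually (\<lambda>\<tau>. 0 \<le> \<tau>) (at_right (0::real))"
    unfolding eventually_at_right_field by (intro exI[of _ 1]) auto
  have slim: "(s \<longlongrightarrow> 0) (at_right 0)" unfolding s_def
    by (rule tendsto_zero_powrI) (use m0 ev0 in \<open>auto intro!: tendsto_intros\<close>)
  have vlim: "(v \<longlongrightarrow> 0) (at_right 0)" unfolding v_def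
    using tendsto_mult[OF tendsto_const[of \<beta>] tendsto_of_real[OF slim]] by simp
  have "eventually (\<lambda>\<tau>. v \<tau> \<in> ball 0 \<epsilon>) (at_right 0)"
    using vlim ri(7) unfolding tendsto_def by (metis open_ball centre_in_ball)
  then obtain \<delta> where \<delta>: "\<delta> > 0" "\<And>\<tau>. \<tau> > 0 \<Longrightarrow> \<tau> < \<delta> \<Longrightarrow> v \<tau> \<in> ball 0 \<epsilon>"
    unfolding eventually_at_right_field by blast
  define W where "W \<tau> = \<Psi> (v \<tau>)" for \<tau>
  define Z where "Z \<tau> = inverse (W \<tau>)" for \<tau>
  have keyfacts: "W \<tau> \<in> ball 0 r \<and> W \<tau> \<in> ball 0 r2 \<and> W \<tau> * \<rho> (W \<tau>) = v \<tau> \<and> W \<tau> \<noteq> 0 \<and> s \<tau> > 0 \<and> H (W \<tau>) = - of_real \<tau>"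
    if \<tau>: "\<tau> \<in> {0<..<\<delta>}" for \<tau>
  proof -
    have vin: "v \<tau> \<in> ball 0 \<epsilon>" using \<delta>(2) \<tau> by simp
    have Wb2: "W \<tau> \<in> ball 0 r2" unfolding W_def using ri(9)[OF vin] .
    have Wb: "W \<tau> \<in> ball 0 r" using Wb2 ri(2) by blast
    have WP: "W \<tau> * \<rho> (W \<tau>) = v \<tau>" unfolding W_def using ri(10)[OF vin] .
    have sp: "s \<tau> > 0" unfolding s_def using \<tau> by simp
    have vnz: "v \<tau> \<noteq> 0" unfolding v_def using bnz sp by simp
    have Wnz: "W \<tau> \<noteq> 0" using WP vnz by auto
    have sm: "s \<tau> ^ m = \<tau>" unfolding s_def using powr_root_pow[OF _ m0, of \<tau>] \<tau> by simp
    have G0nz: "G 0 \<noteq> 0" using fl(3)[of 0] fl(1) by simp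
    have "H (W \<tau>) = W \<tau> ^ m * G (W \<tau>)" using fl(7)[OF Wb] .
    also have "G (W \<tau>) = G 0 * \<rho> (W \<tau>) ^ m" using ri(5)[OF Wb2] G0nz by (simp add: field_simps)
    also have "W \<tau> ^ m * (G 0 * \<rho> (W \<tau>) ^ m) = G 0 * (W \<tau> * \<rho> (W \<tau>)) ^ m" by (simp add: power_mult_distrib)
    also have "\<dots> = G 0 * (\<beta> ^ m * of_real (s \<tau> ^ m))" unfolding WP v_def by (simp add: power_mult_distrib)
    also have "\<dots> = - of_real \<tau>" unfolding fl(4) bm sm using m0 a_def deg
      by (simp add: field_simps) (metis leading_coeff_0_iff not_numeral_le_zero degree_0 d_def)
    finally have "H (W \<tau>) = - of_real \<tau>" .
    then show ?thesis using Wb Wb2 WP Wnz sp by blast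
  qed
  have Wfun: "W = (\<lambda>\<tau>. \<Psi> (v \<tau>))" unfolding W_def by simp
  have Zfun: "Z = (\<lambda>\<tau>. inverse (W \<tau>))" unfolding Z_def by simp
  have deriv: "(Z has_vector_derivative - poly f (Z \<tau>)) (at \<tau>)" if \<tau>: "\<tau> \<in> {0<..<\<delta>}" for \<tau>
  proof -
    note kf = keyfacts[OF \<tau>]
    have Wb: "W \<tau> \<in> ball 0 r" and Wnz: "W \<tau> \<noteq> 0" using kf by auto
    have vin: "v \<tau> \<in> ball 0 \<epsilon>" using \<delta>(2) \<tau> by simp
    define s' where "s' = 1 / real m * \<tau> powr (1 / real m - 1)"
    have ds: "(s has_real_derivative s') (at \<tau>)" unfolding s_def s'_def
      by (rule has_real_derivative_powr) (use \<tau> in simp)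
    have dv: "(v has_vector_derivative \<beta> * of_real s') (at \<tau>)" unfolding v_def
      by (intro has_vector_derivative_mult_right has_vector_derivative_of_real ds)
    have dPsi: "(\<Psi> has_field_derivative deriv \<Psi> (v \<tau>)) (at (v \<tau>))"
      using holomorphic_derivI[OF ri(8) open_ball vin] .
    define D where "D = \<beta> * of_real s' * deriv \<Psi> (v \<tau>)"
    have dW: "(W has_vector_derivative D) (at \<tau>)"
      using field_vector_diff_chain_at[OF dv dPsi] unfolding Wfun D_def by (simp add: o_def)
    define w where "w = W \<tau>"
    have dH: "(H has_field_derivative - (w ^ (d - 2)) / poly q w) (at (W \<tau>))" using fl(6)[OF Wb] unfolding w_def .
    have d1: "((H \<circ> W) has_vector_derivative D * (- (w ^ (d - 2)) / poly q w)) (at \<tau>)"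
      by (rule field_vector_diff_chain_at[OF dW dH])
    have "((\<lambda>x. - complex_of_real x) has_vector_derivative - of_real 1) (at \<tau>)"
      by (intro has_vector_derivative_minus has_vector_derivative_of_real DERIV_ident)
    then have "((\<lambda>x. - complex_of_real x) has_vector_derivative - 1) (at \<tau>)" by simp
    then have d2: "((H \<circ> W) has_vector_derivative - 1) (at \<tau>)"
      by (rule has_vector_derivative_transform_within_open[OF _ open_greaterThanLessThan \<tau>])
         (use keyfacts in auto)
    have uq: "D * (- (w ^ (d - 2)) / poly q w) = - 1" using vector_derivative_unique_at[OF d1 d2] .
    have wnz: "w \<noteq> 0" using Wnz unfolding w_def .
    have qnz: "poly q w \<noteq> 0" using fl(5)[OF Wb] unfolding w_def .
    define pf where "pf = poly f (inverse w)"
    have dd: "d = (d - 2) + 2" using deg unfolding d_def by simp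
    have qq: "poly q w = w ^ (d - 2) * (w ^ 2 * pf)"
    proof -
      have "poly q w = w ^ d * pf" unfolding q_def pf_def d_def using poly_reflect_poly_nz[OF wnz, of f] .
      also have "w ^ d = w ^ (d - 2) * w ^ 2" by (subst dd) (simp only: power_add)
      finally show ?thesis by (simp add: mult_ac)
    qed
    have "D * w ^ (d - 2) = poly q w" using uq qnz by (simp add: field_simps)
    then have "w ^ (d - 2) * D = w ^ (d - 2) * (w ^ 2 * pf)" using qq by (simp add: mult_ac)
    then have DD: "D = w ^ 2 * pf" using wnz by simp
    have dinv: "(inverse has_field_derivative - (inverse w ^ Suc (Suc 0))) (at (W \<tau>))"
      using DERIV_inverse[OF wnz] unfolding w_def .
    have "(Z has_vector_derivative D * - (inverse w ^ Suc (Suc 0))) (at \<tau>)"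
      using field_vector_diff_chain_at[OF dW dinv] unfolding Zfun by (simp add: o_def)
    moreover have "D * - (inverse w ^ Suc (Suc 0)) = - poly f (Z \<tau>)"
      unfolding DD pf_def Z_def w_def[symmetric] using wnz by (simp add: field_simps power2_eq_square)
    ultimately show ?thesis by simp
  qed
  have evI: "eventually (\<lambda>\<tau>. \<tau> \<in> {0<..<\<delta>}) (at_right 0)" using eventually_at_right_real[OF \<delta>(1)] .
  have cPsi: "isCont \<Psi> 0"
    using holomorphic_on_imp_continuous_on[OF ri(8)] continuous_on_eq_continuous_at[OF open_ball] ri(7)
    by (metis centre_in_ball)
  have Wlim: "(W \<longlongrightarrow> 0) (at_right 0)" unfolding Wfun
    using isCont_tendsto_compose[OF cPsi vlim] ri(11) by simp
  have lim1: "filterlim (\<lambda>\<tau>. norm (Z \<tau>)) at_top (at_right 0)"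
  proof -
    have "eventually (\<lambda>\<tau>. 0 < norm (W \<tau>)) (at_right 0)"
      using evI by eventually_elim (use keyfacts in auto)
    from filterlim_inverse_at_top[OF tendsto_norm_zero[OF Wlim] this]
    show ?thesis unfolding Z_def by (simp add: norm_inverse)
  qed
  have crho: "isCont \<rho> 0"
    using holomorphic_on_imp_continuous_on[OF ri(3)] continuous_on_eq_continuous_at[OF open_ball] ri(1)
    by (metis centre_in_ball)
  have rlim: "((\<lambda>\<tau>. \<rho> (W \<tau>)) \<longlongrightarrow> 1) (at_right 0)"
    using isCont_tendsto_compose[OF crho Wlim] ri(4) by simp
  have lim2': "((\<lambda>\<tau>. \<rho> (W \<tau>) / complex_of_real (cmod (\<rho> (W \<tau>))) * P) \<longlongrightarrow> 1 / complex_of_real (cmod 1) * P) (at_right 0)"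
    by (intro tendsto_intros rlim) auto
  have lim2: "((\<lambda>\<tau>. Z \<tau> / complex_of_real (norm (Z \<tau>))) \<longlongrightarrow> P) (at_right 0)"
  proof (rule Lim_transform_eventually)
    show "((\<lambda>\<tau>. \<rho> (W \<tau>) / complex_of_real (cmod (\<rho> (W \<tau>))) * P) \<longlongrightarrow> P) (at_right 0)" using lim2' by simp
    show "\<forall>\<^sub>F \<tau> in at_right 0. \<rho> (W \<tau>) / complex_of_real (cmod (\<rho> (W \<tau>))) * P = Z \<tau> / complex_of_real (norm (Z \<tau>))"
      using evI
    proof eventually_elim
      case (elim \<tau>)
      note kf = keyfacts[OF elim]
      define w where "w = W \<tau>"
      define p where "p = \<rho> w"
      have wnz: "w \<noteq> 0" using kf unfolding w_def by simp
      have pnz: "p \<noteq> 0" unfolding p_def w_def using ri(6) kf by blast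
      have wp: "w * p = cnj P * complex_of_real (k * s \<tau>)" using kf unfolding w_def p_def v_def \<beta>_def by simp
      have nwp: "cmod w * cmod p = k * s \<tau>"
      proof -
        have "cmod w * cmod p = cmod (w * p)" by (simp add: norm_mult)
        also have "\<dots> = k * s \<tau>" unfolding wp using nP k0 kf by (simp add: norm_mult)
        finally show ?thesis .
      qed
      have "complex_of_real (cmod w) * complex_of_real (cmod p) = w * p * P"
        unfolding wp of_real_mult[symmetric] nwp using PP by (simp add: mult_ac)
      then have "p / complex_of_real (cmod p) * P = complex_of_real (cmod w) / w"
        using wnz pnz by (simp add: field_simps)
      moreover have "Z \<tau> / complex_of_real (norm (Z \<tau>)) = complex_of_real (cmod w) / w"
        unfolding Z_def using wnz[unfolded w_def] unfolding w_def by (simp add: norm_inverse norm_divide field_simps)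
      ultimately show ?case unfolding p_def w_def by simp
    qed
  qed
  show ?thesis using deriv lim1 lim2 \<delta>(1) by blast
qed



lemma blowup_contra:
  fixes g :: "real \<Rightarrow> real"
  assumes "F \<noteq> bot" "(g \<longlongrightarrow> l) F" "filterlim g at_top F"
  shows False
  using not_tendsto_and_filterlim_at_infinity[OF assms(1,2) filterlim_at_top_imp_at_infinity[OF assms(3)]] .

lemma sep_end_right:
  assumes max: "maximal_solution f w J" and sub: "{a<..<b} \<subseteq> J" and ab: "a < b"
    and blow: "filterlim (\<lambda>t. norm (w t)) at_top (at_left b)"
  shows "J \<subseteq> {..<b}"
proof
  fix t assume tJ: "t \<in> J"
  show "t \<in> {..<b}"
  proof (rule ccontr)
    assume "t \<notin> {..<b}"
    then have tb: "b \<le> t" by simp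
    have xJ: "(a + b) / 2 \<in> J" using sub ab by auto
    have iJ: "is_interval J" using max unfolding maximal_solution_def by blast
    have h: "(a + b) / 2 \<le> b" using ab by simp
    have bJ: "b \<in> J" using iJ xJ tJ tb h unfolding is_interval_1 by blast
    have "ode_solution_on f w J" using max unfolding maximal_solution_def by blast
    then have "(w has_vector_derivative poly f (w b)) (at b)" using bJ unfolding ode_solution_on_def by blast
    then have "isCont w b" by (rule has_vector_derivative_continuous)
    then have "((\<lambda>t. norm (w t)) \<longlongrightarrow> norm (w b)) (at b)" unfolding isCont_def by (intro tendsto_intros)
    then have "((\<lambda>t. norm (w t)) \<longlongrightarrow> norm (w b)) (at_left b)" by (rule tendsto_mono[OF at_le, rotated]) simp
    then show False using blowup_contra[OF _ _ blow] by simp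
  qed
qed

lemma sep_end_left:
  assumes max: "maximal_solution f w J" and sub: "{a<..<b} \<subseteq> J" and ab: "a < b"
    and blow: "filterlim (\<lambda>t. norm (w t)) at_top (at_right a)"
  shows "J \<subseteq> {a<..}"
proof
  fix t assume tJ: "t \<in> J"
  show "t \<in> {a<..}"
  proof (rule ccontr)
    assume "t \<notin> {a<..}"
    then have tb: "t \<le> a" by simp
    have xJ: "(a + b) / 2 \<in> J" using sub ab by auto
    have iJ: "is_interval J" using max unfolding maximal_solution_def by blast
    have h: "a \<le> (a + b) / 2" using ab by simp
    have aJ: "a \<in> J" using iJ xJ tJ tb h unfolding is_interval_1 by blast
    have "ode_solution_on f w J" using max unfolding maximal_solution_def by blast
    then have "(w has_vector_derivative poly f (w a)) (at a)" using aJ unfolding ode_solution_on_def by blast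
    then have "isCont w a" by (rule has_vector_derivative_continuous)
    then have "((\<lambda>t. norm (w t)) \<longlongrightarrow> norm (w a)) (at a)" unfolding isCont_def by (intro tendsto_intros)
    then have "((\<lambda>t. norm (w t)) \<longlongrightarrow> norm (w a)) (at_right a)" by (rule tendsto_mono[OF at_le, rotated]) simp
    then show False using blowup_contra[OF _ _ blow] by simp
  qed
qed



theorem mainTheorem3:
  fixes f :: "complex poly" and p1 p2 \<alpha> :: real
  assumes "degree f \<ge> 2"
    and "p1\<^sup>2 + p2\<^sup>2 = 1"
    and "p1 * hom_Q f (degree f) p1 p2 - p2 * hom_P f (degree f) p1 p2 = 0"
    and "hom_P f (degree f) p1 p2 = \<alpha> * p1" and "hom_Q f (degree f) p1 p2 = \<alpha> * p2"
  shows "\<alpha> \<noteq> 0 \<and>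
    (\<alpha> > 0 \<longrightarrow> (\<exists>z I. maximal_solution f z I \<and> bdd_above I \<and>
        filterlim (\<lambda>t. norm (z t)) at_top (at_left (Sup I)) \<and>
        ((\<lambda>t. z t / complex_of_real (norm (z t))) \<longlongrightarrow> Complex p1 p2) (at_left (Sup I)))) \<and>
    (\<alpha> < 0 \<longrightarrow> (\<exists>z I. maximal_solution f z I \<and> bdd_below I \<and>
        filterlim (\<lambda>t. norm (z t)) at_top (at_right (Inf I)) \<and>
        ((\<lambda>t. z t / complex_of_real (norm (z t))) \<longlongrightarrow> Complex p1 p2) (at_right (Inf I))))"
proof -
  note deg = assms(1)
  define P where "P = Complex p1 p2"
  have nP: "cmod P = 1" unfolding P_def cmod_def using assms(2) by simp
  have eq: "lead_coeff f * P ^ degree f = complex_of_real \<alpha> * P"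
    using assms(4,5) unfolding P_def hom_P_def hom_Q_def by (simp add: complex_eq_iff)
  have fnz: "f \<noteq> 0" using deg by auto
  have Pnz: "P \<noteq> 0" using nP by auto
  have anz: "\<alpha> \<noteq> 0"
  proof
    assume "\<alpha> = 0"
    then have "lead_coeff f * P ^ degree f = 0" using eq by simp
    then show False using fnz Pnz by simp
  qed
  have pos: "\<exists>z I. maximal_solution f z I \<and> bdd_above I \<and>
        filterlim (\<lambda>t. norm (z t)) at_top (at_left (Sup I)) \<and>
        ((\<lambda>t. z t / complex_of_real (norm (z t))) \<longlongrightarrow> P) (at_left (Sup I))" if apos: "\<alpha> > 0"
  proof -
    obtain \<delta> Z where \<delta>: "\<delta> > 0" and dZ: "\<forall>\<tau>\<in>{0<..<\<delta>}. (Z has_vector_derivative - poly f (Z \<tau>)) (at \<tau>)"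
      and l1: "filterlim (\<lambda>\<tau>. norm (Z \<tau>)) at_top (at_right 0)"
      and l2: "((\<lambda>\<tau>. Z \<tau> / complex_of_real (norm (Z \<tau>))) \<longlongrightarrow> P) (at_right 0)"
      using local_sep[OF deg nP eq apos] by blast
    define z0 where "z0 t = Z (- t)" for t
    have sol: "ode_solution_on f z0 {-\<delta><..<0}"
      unfolding ode_solution_on_def
    proof
      fix t assume t: "t \<in> {-\<delta><..<0}"
      have "((\<lambda>x::real. - x) has_vector_derivative - 1) (at t)"
        by (intro has_vector_derivative_minus has_vector_derivative_id)
      moreover have "(Z has_vector_derivative - poly f (Z (- t))) (at (- t))" using dZ t by auto
      ultimately have "((Z \<circ> (\<lambda>x. - x)) has_vector_derivative (- 1) *\<^sub>R (- poly f (Z (- t)))) (at t)"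
        by (rule vector_diff_chain_at)
      then show "(z0 has_vector_derivative poly f (z0 t)) (at t)"
        unfolding z0_def by (simp add: o_def)
    qed
    have iv: "is_interval {-\<delta><..<0}" unfolding is_interval_1 by auto
    obtain J w where max: "maximal_solution f w J" and IJ: "{-\<delta><..<0} \<subseteq> J" and wz: "\<forall>t\<in>{-\<delta><..<0}. w t = z0 t"
      using maximal_extension[OF sol open_greaterThanLessThan iv] \<delta> by fastforce
    have ev: "eventually (\<lambda>t. w t = z0 t) (at_left 0)"
      using eventually_at_left_real[of "-\<delta>" 0] \<delta> wz by (auto elim: eventually_mono)
    have L1: "filterlim (\<lambda>t. norm (z0 t)) at_top (at_left 0)"
      unfolding z0_def at_left_minus filterlim_filtermap using l1 by simp
    have L2: "((\<lambda>t. z0 t / complex_of_real (norm (z0 t))) \<longlongrightarrow> P) (at_left 0)"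
      unfolding z0_def at_left_minus filterlim_filtermap using l2 by simp
    have W1: "filterlim (\<lambda>t. norm (w t)) at_top (at_left 0)"
    proof -
      have e: "eventually (\<lambda>t. norm (w t) = norm (z0 t)) (at_left 0)" using ev by eventually_elim simp
      show ?thesis using L1 filterlim_cong[OF refl refl e] by simp
    qed
    have W2: "((\<lambda>t. w t / complex_of_real (norm (w t))) \<longlongrightarrow> P) (at_left 0)"
    proof -
      have e: "eventually (\<lambda>t. w t / complex_of_real (norm (w t)) = z0 t / complex_of_real (norm (z0 t))) (at_left 0)"
        using ev by eventually_elim simp
      show ?thesis using L2 filterlim_cong[OF refl refl e] by simp
    qed
    have Jb: "J \<subseteq> {..<0}" using sep_end_right[OF max IJ _ W1] \<delta> by simp
    then have bdd: "bdd_above J" by (meson bdd_above_Iio bdd_above_mono)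
    have "Sup J \<le> 0" using Jb max unfolding maximal_solution_def
      by (intro cSup_least) auto
    moreover have "Sup {-\<delta><..<0} \<le> Sup J" using \<delta> IJ bdd by (intro cSup_subset_mono) auto
    ultimately have S0: "Sup J = 0" using \<delta> by simp
    show ?thesis using max bdd W1 W2 S0 by (intro exI[of _ w] exI[of _ J]) simp
  qed
  have neg: "\<exists>z I. maximal_solution f z I \<and> bdd_below I \<and>
        filterlim (\<lambda>t. norm (z t)) at_top (at_right (Inf I)) \<and>
        ((\<lambda>t. z t / complex_of_real (norm (z t))) \<longlongrightarrow> P) (at_right (Inf I))" if aneg: "\<alpha> < 0"
  proof -
    have deg': "degree (-f) \<ge> 2" using deg by simp
    have eq': "lead_coeff (-f) * P ^ degree (-f) = complex_of_real (-\<alpha>) * P" using eq by simp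
    obtain \<delta> Z where \<delta>: "\<delta> > 0" and dZ: "\<forall>\<tau>\<in>{0<..<\<delta>}. (Z has_vector_derivative - poly (-f) (Z \<tau>)) (at \<tau>)"
      and l1: "filterlim (\<lambda>\<tau>. norm (Z \<tau>)) at_top (at_right 0)"
      and l2: "((\<lambda>\<tau>. Z \<tau> / complex_of_real (norm (Z \<tau>))) \<longlongrightarrow> P) (at_right 0)"
      using local_sep[OF deg' nP eq'] aneg by auto
    have sol: "ode_solution_on f Z {0<..<\<delta>}"
      unfolding ode_solution_on_def using dZ by simp
    have iv: "is_interval {0<..<\<delta>}" unfolding is_interval_1 by auto
    obtain J w where max: "maximal_solution f w J" and IJ: "{0<..<\<delta>} \<subseteq> J" and wz: "\<forall>t\<in>{0<..<\<delta>}. w t = Z t"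
      using maximal_extension[OF sol open_greaterThanLessThan iv] \<delta> by fastforce
    have ev: "eventually (\<lambda>t. w t = Z t) (at_right 0)"
      using eventually_at_right_real[of 0 \<delta>] \<delta> wz by (auto elim: eventually_mono)
    have W1: "filterlim (\<lambda>t. norm (w t)) at_top (at_right 0)"
    proof -
      have e: "eventually (\<lambda>t. norm (w t) = norm (Z t)) (at_right 0)" using ev by eventually_elim simp
      show ?thesis using l1 filterlim_cong[OF refl refl e] by simp
    qed
    have W2: "((\<lambda>t. w t / complex_of_real (norm (w t))) \<longlongrightarrow> P) (at_right 0)"
    proof -
      have e: "eventually (\<lambda>t. w t / complex_of_real (norm (w t)) = Z t / complex_of_real (norm (Z t))) (at_right 0)"
        using ev by eventually_elim simp
      show ?thesis using l2 filterlim_cong[OF refl refl e] by simp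
    qed
    have Jb: "J \<subseteq> {0<..}" using sep_end_left[OF max IJ _ W1] \<delta> by simp
    then have bdd: "bdd_below J" by (meson bdd_below_Ioi bdd_below_mono)
    have "0 \<le> Inf J" using Jb max unfolding maximal_solution_def
      by (intro cInf_greatest) auto
    moreover have "Inf J \<le> Inf {0<..<\<delta>}" using \<delta> IJ bdd by (intro cInf_superset_mono) auto
    ultimately have S0: "Inf J = 0" using \<delta> by simp
    show ?thesis using max bdd W1 W2 S0 by (intro exI[of _ w] exI[of _ J]) simp
  qed
  show ?thesis using anz pos neg unfolding P_def by blast
qed


end
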